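(* For every integer $n\ge 2$, the coordinator polynomial $h_{D_n}(x)$ of the root lattice $D_n$ is real-rooted, i.e. all of its complex zeros are real.
   Context: Let $\mathcal{L}$ be a lattice (a discrete subgroup of a finite-dimensional real Euclidean space) of rank $d$, generated as a monoid by a finite set $M$, i.e. every vector of $\mathcal{L}$ is a nonnegative integer linear combination of elements of $M$. For $v\in\mathcal{L}$ define its length $\ell(v)=\min\{\sum_{m\in M}c_m : v=\sum_{m\in M}c_m m,\ c_m\in\mathbb{Z}_{\ge0}\}$, and let $S(k)$ be the number of $v\in\mathcal{L}$ with $\ell(v)=k$. Then $\sum_{k\ge0}S(k)x^k=h(x)/(1-x)^d$ for a polynomial $h(x)$ of degree at most $d$, called the coordinator polynomial of $\mathcal{L}$ with respect to $M$. The root lattice $D_n$ is the lattice in $\mathbb{R}^n$ generated as a monoid by $M_{D_n}=\{\pm e_i\pm e_j : 1\le i<j\le n\}$, where $e_i$ are the standard basis vectors; $h_{D_n}(x)$ denotes its coordinator polynomial with respect to $M_{D_n}$. (It is known that $h_{D_n}(x)=\frac{(1+\sqrt{x})^{2n}+(1-\sqrt{x})^{2n}}{2}-2nx(1+x)^{n-2}$.) *)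

theory Defs
  imports Complex_Main "HOL-Computational_Algebra.Computational_Algebra"
begin

text \<open>Vectors of the lattice are represented as integer-valued functions
  on the coordinate indices (only coordinates below n are used).\<close>

type_synonym vec = "nat \<Rightarrow> int"

definition represents :: "vec set \<Rightarrow> vec \<Rightarrow> nat \<Rightarrow> bool" where
  "represents M v k \<longleftrightarrow> (\<exists>c :: vec \<Rightarrow> nat.
      v = (\<lambda>i. \<Sum>m\<in>M. int (c m) * m i) \<and> (\<Sum>m\<in>M. c m) = k)"

definition gen_lattice :: "vec set \<Rightarrow> vec set" where
  "gen_lattice M = {v. \<exists>k. represents M v k}"

definition word_length :: "vec set \<Rightarrow> vec \<Rightarrow> nat" where
  "word_length M v = (LEAST k. represents M v k)"

definition coord_seq :: "vec set \<Rightarrow> nat \<Rightarrow> nat" where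
  "coord_seq M k = card {v \<in> gen_lattice M. word_length M v = k}"

text \<open>Coordinator polynomial: the polynomial h with
  sum_k S(k) x^k = h(x) / (1-x)^d, i.e. h = (1-x)^d * sum_k S(k) x^k.\<close>
definition coordinator_poly :: "vec set \<Rightarrow> nat \<Rightarrow> real poly" where
  "coordinator_poly M d =
     (THE h. fps_of_poly h = (1 - fps_X) ^ d * Abs_fps (\<lambda>k. real (coord_seq M k)))"

definition M_D :: "nat \<Rightarrow> vec set" where
  "M_D n = {v. \<exists>i j (s::int) (t::int). i < j \<and> j < n \<and> s \<in> {1, -1} \<and> t \<in> {1, -1} \<and>
      v = (\<lambda>k. if k = i then s else if k = j then t else 0)}"

definition h_D :: "nat \<Rightarrow> real poly" where
  "h_D n = coordinator_poly (M_D n) n"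

definition real_rooted :: "real poly \<Rightarrow> bool" where
  "real_rooted p \<longleftrightarrow> (\<forall>z::complex. poly (map_poly complex_of_real p) z = 0 \<longrightarrow> z \<in> \<real>)"

end

theory Submission
  imports Defs
begin

fun AB :: "nat \<Rightarrow> real poly \<times> real poly" where
  "AB 0 = (1, 0)"
| "AB (Suc n) = (fst (AB n) * [:1,1:] + smult 2 ([:0,1:] * snd (AB n)),
                 smult 2 (fst (AB n)) + [:1,1:] * snd (AB n))"

definition PA :: "nat \<Rightarrow> real poly" where "PA n = fst (AB n)"
definition PB :: "nat \<Rightarrow> real poly" where "PB n = snd (AB n)"

lemma PA_0[simp]: "PA 0 = 1" and PB_0[simp]: "PB 0 = 0" by (simp_all add: PA_def PB_def)
lemma PA_Suc: "PA (Suc n) = PA n * [:1,1:] + smult 2 ([:0,1:] * PB n)"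
  and PB_Suc: "PB (Suc n) = smult 2 (PA n) + [:1,1:] * PB n"
  by (simp_all add: PA_def PB_def)

definition HH :: "nat \<Rightarrow> real poly" where
  "HH n = PA n - smult (2 * real n) ([:0,1:] * [:1,1:] ^ (n - 2))"

lemma trig_AB:
  fixes \<theta> :: real
  assumes c: "cos \<theta> \<noteq> 0"
  defines "t \<equiv> sin \<theta> / cos \<theta>"
  shows "poly (PA n) (-(t^2)) * cos \<theta> ^ (2*n) = cos (2 * real n * \<theta>) \<and>
         poly (PB n) (-(t^2)) * t * cos \<theta> ^ (2*n) = sin (2 * real n * \<theta>)"
proof (induction n)
  case 0
  then show ?case by simp
next
  case (Suc n)
  define a where "a = poly (PA n) (-(t^2))"
  define b where "b = poly (PB n) (-(t^2))"
  define c where "c = cos \<theta>"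
  define s where "s = sin \<theta>"
  have sc: "s = t * c" using c unfolding t_def s_def c_def by simp
  have IH1: "a * c^(2*n) = cos (2 * real n * \<theta>)" and IH2: "b * t * c^(2*n) = sin (2 * real n * \<theta>)"
    using Suc unfolding a_def b_def c_def by auto
  have ang: "2 * real (Suc n) * \<theta> = 2 * real n * \<theta> + 2 * \<theta>" by (simp add: algebra_simps)
  have c2: "cos (2*\<theta>) = c^2 - s^2" unfolding c_def s_def by (simp add: cos_double)
  have s2: "sin (2*\<theta>) = 2 * s * c" unfolding c_def s_def by (simp add: sin_double)
  have e: "c ^ (2 * Suc n) = c^(2*n) * c^2" by (simp add: power_add power2_eq_square)
  have A: "poly (PA (Suc n)) (-(t^2)) = a * (1 - t^2) - 2 * t^2 * b"
    by (simp add: PA_Suc a_def b_def algebra_simps)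
  have B: "poly (PB (Suc n)) (-(t^2)) = 2 * a + (1 - t^2) * b"
    by (simp add: PB_Suc a_def b_def algebra_simps)
  have "poly (PA (Suc n)) (-(t^2)) * cos \<theta> ^ (2 * Suc n)
        = (a * c^(2*n)) * (c^2 - s^2) - (b * t * c^(2*n)) * (2 * s * c)"
    unfolding A e c_def[symmetric] sc by (simp add: algebra_simps power2_eq_square)
  also have "\<dots> = cos (2 * real (Suc n) * \<theta>)"
    unfolding IH1 IH2 ang cos_add c2 s2 by simp
  finally have 1: "poly (PA (Suc n)) (-(t^2)) * cos \<theta> ^ (2 * Suc n) = cos (2 * real (Suc n) * \<theta>)" .
  have "poly (PB (Suc n)) (-(t^2)) * t * cos \<theta> ^ (2 * Suc n)
        = (b * t * c^(2*n)) * (c^2 - s^2) + (a * c^(2*n)) * (2 * s * c)"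
    unfolding B e c_def[symmetric] sc by (simp add: algebra_simps power2_eq_square)
  also have "\<dots> = sin (2 * real (Suc n) * \<theta>)"
    unfolding IH1 IH2 ang sin_add c2 s2 by simp
  finally show ?case using 1 by simp
qed

definition gg :: "nat \<Rightarrow> real \<Rightarrow> real" where
  "gg n \<phi> = cos (real n * \<phi>) + real n / 2 * sin \<phi> ^ 2 * cos \<phi> ^ (n - 2)"

lemma trig_H:
  fixes \<theta> :: real
  assumes c: "cos \<theta> \<noteq> 0" and n: "n \<ge> 2"
  shows "poly (HH n) (-(tan \<theta>^2)) * cos \<theta> ^ (2*n) = gg n (2*\<theta>)"
proof -
  define t where "t = sin \<theta> / cos \<theta>"
  define c where "c = cos \<theta>"
  define s where "s = sin \<theta>"
  obtain m where m: "n = m + 2" using n by (metis add.commute le_Suc_ex)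
  have tt: "tan \<theta> = t" unfolding t_def by (simp add: tan_def)
  have sc: "s = t * c" using c unfolding t_def s_def c_def by simp
  have PAe: "poly (PA n) (-(t^2)) * c ^ (2*n) = cos (2 * real n * \<theta>)"
    using trig_AB[OF c, of n] unfolding t_def c_def by simp
  have c2: "cos (2*\<theta>) = c^2 - s^2" unfolding c_def s_def by (simp add: cos_double)
  have s2: "sin (2*\<theta>) = 2 * s * c" unfolding c_def s_def by (simp add: sin_double)
  have pw: "c ^ (2*n) = c^2 * c^2 * (c^2)^m"
  proof -
    have "c^(2*n) = (c^2)^(m+2)" unfolding m by (simp only: power_mult)
    also have "\<dots> = (c^2)^m * (c^2)^2" by (rule power_add)
    also have "(c^2)^2 = c^2 * c^2" by (rule power2_eq_square)
    finally show ?thesis by (simp add: algebra_simps)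
  qed
  have nm: "n - 2 = m" using m by simp
  have h1: "poly (HH n) (-(t^2)) = poly (PA n) (-(t^2)) + 2 * real n * t^2 * (1 - t^2)^m"
    by (simp add: HH_def nm)
  have h2: "poly (HH n) (-(t^2)) * c ^ (2*n) = poly (PA n) (-(t^2)) * c ^ (2*n)
          + 2 * real n * (t^2 * c^2) * c^2 * ((1 - t^2)^m * (c^2)^m)"
    unfolding h1 pw by (simp add: algebra_simps)
  have h3: "t^2 * c^2 = s^2" using sc by (simp add: power_mult_distrib)
  have h4: "(1 - t^2) * c^2 = c^2 - s^2" using sc by (simp add: power_mult_distrib algebra_simps)
  have h5: "(1 - t^2)^m * (c^2)^m = (c^2 - s^2)^m" by (simp only: power_mult_distrib[symmetric] h4)
  have "poly (HH n) (-(t^2)) * c ^ (2*n) = cos (2 * real n * \<theta>) + real n / 2 * (2*s*c)^2 * (c^2 - s^2)^m"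
    unfolding h2 h3 h5 PAe by (simp add: power_mult_distrib algebra_simps)
  then show ?thesis unfolding gg_def tt c_def[symmetric] c2 s2 m
    by (simp add: algebra_simps)
qed

lemma bound_aux:
  fixes w :: real and k :: nat
  assumes "0 \<le> w" "w \<le> 1"
  shows "(real k + 2) * (1 - w^2) * w^k \<le> 2 * (1 - w^(k+2))"
proof -
  have s1: "(\<Sum>i<k+1. w^i) \<ge> (\<Sum>i<k+1. w^k)"
    by (intro sum_mono power_decreasing) (use assms in auto)
  have "(\<Sum>i<k+2. w^i) = (\<Sum>i<k+1. w^i) + w^(k+1)" by simp
  hence s2: "(\<Sum>i<k+2. w^i) \<ge> (real k + 1) * w^k + w^(k+1)" using s1 by (simp add: algebra_simps)
  have eq: "1 - w^(k+2) = (1 - w) * (\<Sum>i<k+2. w^i)" by (rule one_diff_power_eq)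
  have "2 * (1 - w^(k+2)) \<ge> 2 * (1 - w) * ((real k + 1) * w^k + w^(k+1))"
  proof -
    have "(1 - w) * (\<Sum>i<k+2. w^i) \<ge> (1 - w) * ((real k + 1) * w^k + w^(k+1))"
      by (rule mult_left_mono[OF s2]) (use assms in simp)
    then show ?thesis unfolding eq by (simp only: mult.assoc)
  qed
  moreover have "2 * (1 - w) * ((real k + 1) * w^k + w^(k+1)) - (real k + 2) * (1 - w^2) * w^k
      = real k * (1 - w)^2 * w^k"
    by (simp add: algebra_simps power2_eq_square)
  moreover have "real k * (1 - w)^2 * w^k \<ge> 0" using assms by simp
  ultimately show ?thesis by linarith
qed

lemma gg_bound:
  assumes n: "n \<ge> 3"
  shows "\<bar>real n / 2 * sin \<phi> ^ 2 * cos \<phi> ^ (n - 2)\<bar> < 1"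
proof -
  define w where "w = \<bar>cos \<phi>\<bar>"
  obtain k where k: "n = k + 2" and k1: "k \<ge> 1" using n by (intro that[of "n - 2"]) auto
  have w0: "0 \<le> w" and w1: "w \<le> 1" unfolding w_def by auto
  have sn: "sin \<phi> ^ 2 = 1 - w^2" unfolding w_def by (simp add: sin_squared_eq)
  have cs: "(cos \<phi>)^2 \<le> 1" using abs_cos_le_one[of \<phi>] by (simp add: abs_square_le_1)
  have "\<bar>real n / 2 * sin \<phi> ^ 2 * cos \<phi> ^ (n - 2)\<bar> = (real k + 2) / 2 * (1 - w^2) * w^k"
    unfolding sn k using w0 w1 using cs by (simp add: abs_mult power_abs w_def)
  also have "\<dots> \<le> 1 - w^(k+2)" using bound_aux[OF w0 w1, of k] by simp
  finally have le: "\<bar>real n / 2 * sin \<phi> ^ 2 * cos \<phi> ^ (n - 2)\<bar> \<le> 1 - w^(k+2)" .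
  show ?thesis
  proof (cases "w = 0")
    case True
    then show ?thesis using k1 unfolding w_def k by (simp add: power_0_left)
  next
    case False
    then have "w^(k+2) > 0" using w0 by simp
    then show ?thesis using le by linarith
  qed
qed

lemma poly_of_real_map: "poly (map_poly complex_of_real p) (complex_of_real x) = complex_of_real (poly p x)"
  by (induction p) (auto simp: map_poly_pCons)

lemma degree_PAB: "degree (PA n) \<le> n \<and> degree (PB n) \<le> n"
proof (induction n)
  case 0 then show ?case by simp
next
  case (Suc n)
  have a1: "degree (PA n * [:1,1:]) \<le> Suc n" using degree_mult_le[of "PA n" "[:1,1:]"] Suc by simp
  have a2: "degree (smult 2 ([:0,1:] * PB n)) \<le> Suc n"
    using degree_mult_le[of "[:0,1:]" "PB n"] Suc degree_smult_le[of 2 "[:0,1:] * PB n"] by simp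
  have b1: "degree (smult 2 (PA n)) \<le> Suc n" using degree_smult_le[of 2 "PA n"] Suc by simp
  have b2: "degree ([:1,1:] * PB n) \<le> Suc n" using degree_mult_le[of "[:1,1:]" "PB n"] Suc by simp
  show ?case unfolding PA_Suc PB_Suc using a1 a2 b1 b2 by (simp add: degree_add_le)
qed

lemma degree_HH: assumes "n \<ge> 2" shows "degree (HH n) \<le> n"
proof -
  have "degree ([:0,1:] * [:1,1::real:] ^ (n - 2)) \<le> 1 + (n - 2)"
    using degree_mult_le[of "[:0,1::real:]" "[:1,1:] ^ (n - 2)"] degree_power_le[of "[:1,1::real:]" "n - 2"]
    by simp
  then have "degree (smult (2 * real n) ([:0,1:] * [:1,1::real:] ^ (n - 2))) \<le> n"
    using degree_smult_le[of "2 * real n" "[:0,1:] * [:1,1::real:] ^ (n - 2)"] using assms by linarith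
  then show ?thesis unfolding HH_def using degree_PAB[of n] by (simp add: degree_diff_le)
qed

lemma poly_PA0: "poly (PA n) 0 = 1"
  by (induction n) (simp_all add: PA_Suc)

lemma HH_nz: "HH n \<noteq> 0"
proof
  assume "HH n = 0"
  then have "poly (HH n) 0 = 0" by simp
  then show False by (simp add: HH_def poly_PA0)
qed

lemma gg_cont: "isCont (gg n) x"
  unfolding gg_def by (intro continuous_intros)

lemma gg_at:
  assumes n: "n \<ge> 3" and j: "j \<le> n"
  shows "(even j \<longrightarrow> gg n (real j * pi / real n) > 0) \<and> (odd j \<longrightarrow> gg n (real j * pi / real n) < 0)"
proof -
  have c: "cos (real n * (real j * pi / real n)) = (-1)^j" using n by simp
  have b: "\<bar>real n / 2 * sin (real j * pi / real n) ^ 2 * cos (real j * pi / real n) ^ (n - 2)\<bar> < 1"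
    by (rule gg_bound[OF n])
  show ?thesis unfolding gg_def c using b by (auto simp: abs_less_iff)
qed

lemma gg_root:
  assumes n: "n \<ge> 3" and j: "j < n"
  shows "\<exists>\<phi>. real j * pi / real n < \<phi> \<and> \<phi> < real (Suc j) * pi / real n \<and> gg n \<phi> = 0"
proof -
  define a where "a = real j * pi / real n"
  define b where "b = real (Suc j) * pi / real n"
  have ab: "a \<le> b" unfolding a_def b_def using n by (simp add: divide_right_mono)
  have ga: "gg n a \<noteq> 0" using gg_at[OF n, of j] j unfolding a_def by (cases "even j") auto
  have gb: "gg n b \<noteq> 0" using gg_at[OF n, of "Suc j"] j unfolding b_def by (cases "even (Suc j)") auto
  have "\<exists>x. a \<le> x \<and> x \<le> b \<and> gg n x = 0"
  proof (cases "even j")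
    case True
    then have "gg n a > 0" "gg n b < 0" using gg_at[OF n, of j] gg_at[OF n, of "Suc j"] j
      unfolding a_def b_def by auto
    then show ?thesis using IVT2[of "gg n" b 0 a] ab gg_cont by auto
  next
    case False
    then have "gg n a < 0" "gg n b > 0" using gg_at[OF n, of j] gg_at[OF n, of "Suc j"] j
      unfolding a_def b_def by auto
    then show ?thesis using IVT[of "gg n" a 0 b] ab gg_cont by auto
  qed
  then obtain x where "a \<le> x" "x \<le> b" "gg n x = 0" by blast
  with ga gb have "a < x" "x < b" by (auto simp: order.order_iff_strict)
  then show ?thesis using \<open>gg n x = 0\<close> unfolding a_def b_def by blast
qed

lemma HH_2: "HH 2 = [:1,2,1:]"
  by (simp add: HH_def numeral_2_eq_2 PA_Suc PB_Suc)

lemma HH_real_rooted: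
  assumes n2: "n \<ge> 2"
  shows "real_rooted (HH n)"
proof (cases "n = 2")
  case True
  show ?thesis unfolding real_rooted_def True HH_2
  proof (intro allI impI)
    fix z :: complex
    assume "poly (map_poly complex_of_real [:1,2,1:]) z = 0"
    then have "(z + 1)^2 = 0" by (simp add: map_poly_pCons power2_eq_square algebra_simps)
    then have "z = -1" by (simp add: add_eq_0_iff2)
    then show "z \<in> \<real>" by simp
  qed
next
  case False
  with n2 have n: "n \<ge> 3" by simp
  have "\<forall>j. \<exists>\<phi>. j < n \<longrightarrow> real j * pi / real n < \<phi> \<and> \<phi> < real (Suc j) * pi / real n \<and> gg n \<phi> = 0"
    using gg_root[OF n] by blast
  then obtain f where f: "\<And>j. j < n \<Longrightarrow> real j * pi / real n < f j \<and> f j < real (Suc j) * pi / real n \<and> gg n (f j) = 0"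
    by metis
  define r where "r j = -(tan (f j / 2) ^ 2)" for j
  have fpos: "0 < f j" "f j < pi" if "j < n" for j
  proof -
    have "0 \<le> real j * pi / real n" by simp
    then show "0 < f j" using f[OF that] by linarith
    have "real (Suc j) * pi / real n \<le> real n * pi / real n"
      using that by (intro divide_right_mono mult_right_mono) auto
    then show "f j < pi" using f[OF that] n by simp
  qed
  have root: "poly (HH n) (r j) = 0" if j: "j < n" for j
  proof -
    have c: "cos (f j / 2) > 0" using fpos[OF j] by (intro cos_gt_zero_pi) auto
    have "poly (HH n) (r j) * cos (f j / 2) ^ (2*n) = gg n (2 * (f j / 2))"
      unfolding r_def by (rule trig_H) (use c n2 in auto)
    also have "\<dots> = 0" using f[OF j] by simp
    finally show ?thesis using c by simp
  qed
  have mono: "r j' < r j" if "j < j'" "j' < n" for j j'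
  proof -
    have "f j < real (Suc j) * pi / real n" using f[of j] that by simp
    also have "\<dots> \<le> real j' * pi / real n" using that n by (intro divide_right_mono mult_right_mono) auto
    also have "\<dots> < f j'" using f[of j'] that by simp
    finally have lt: "f j < f j'" .
    have t1: "0 < tan (f j / 2)" using fpos[of j] that by (intro tan_gt_zero) auto
    have "tan (f j / 2) < tan (f j' / 2)" using fpos[of j] fpos[of j'] that lt
      by (intro tan_monotone) auto
    then have "tan (f j / 2) ^ 2 < tan (f j' / 2) ^ 2" using t1 by (intro power_strict_mono) auto
    then show ?thesis unfolding r_def by simp
  qed
  have inj: "inj_on r {..<n}"
  proof (rule inj_onI)
    fix j j' assume "j \<in> {..<n}" "j' \<in> {..<n}" "r j = r j'"
    then show "j = j'" using mono[of j j'] mono[of j' j] by (cases j j' rule: linorder_cases) auto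
  qed
  show ?thesis unfolding real_rooted_def
  proof (intro allI impI)
    fix z :: complex
    assume z: "poly (map_poly complex_of_real (HH n)) z = 0"
    show "z \<in> \<real>"
    proof (rule ccontr)
      assume zn: "z \<notin> \<real>"
      define Q where "Q = map_poly complex_of_real (HH n)"
      have Qnz: "Q \<noteq> 0" unfolding Q_def using HH_nz[of n] by (subst map_poly_eq_0_iff) auto
      have degQ: "degree Q \<le> n" unfolding Q_def using degree_HH[OF n2] by (subst degree_map_poly) auto
      define S where "S = insert z ((\<lambda>j. complex_of_real (r j)) ` {..<n})"
      have inj2: "inj_on (\<lambda>j. complex_of_real (r j)) {..<n}"
        using inj by (auto simp: inj_on_def)
      have "z \<notin> (\<lambda>j. complex_of_real (r j)) ` {..<n}" using zn by auto
      then have cS: "card S = Suc n" unfolding S_def using card_image[OF inj2] by simp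
      have "S \<subseteq> {x. poly Q x = 0}"
        unfolding S_def Q_def using z root by (auto simp: poly_of_real_map)
      then have "card S \<le> card {x. poly Q x = 0}"
        by (intro card_mono poly_roots_finite Qnz)
      also have "\<dots> \<le> degree Q" by (rule card_poly_roots_bound[OF Qnz])
      finally show False using cS degQ by simp
    qed
  qed
qed

definition V :: "nat \<Rightarrow> vec set" where "V n = {v. \<forall>i\<ge>n. v i = 0}"
definition l1 :: "nat \<Rightarrow> vec \<Rightarrow> nat" where "l1 n v = (\<Sum>i<n. nat \<bar>v i\<bar>)"

lemma l1_Suc: "l1 (Suc n) v = l1 n v + nat \<bar>v n\<bar>"
  by (simp add: l1_def)

lemma l1_upd: "l1 n (v(n := a)) = l1 n v"
  unfolding l1_def by (intro sum.cong) auto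

lemma l1_ge: "i < n \<Longrightarrow> nat \<bar>v i\<bar> \<le> l1 n v"
  unfolding l1_def by (rule member_le_sum) auto

lemma V_upd: "w \<in> V n \<Longrightarrow> w(n := a) \<in> V (Suc n)"
  by (auto simp: V_def)

lemma V_restr: "v \<in> V (Suc n) \<Longrightarrow> v(n := 0) \<in> V n"
  by (auto simp: V_def)

lemma finite_box: "finite {v \<in> V n. \<forall>i<n. \<bar>v i\<bar> \<le> M}"
proof (induction n)
  case 0
  have "{v \<in> V 0. \<forall>i<0. \<bar>v i\<bar> \<le> M} \<subseteq> {\<lambda>_. 0}" by (auto simp: V_def)
  then show ?case using finite_subset by blast
next
  case (Suc n)
  have "{v \<in> V (Suc n). \<forall>i<Suc n. \<bar>v i\<bar> \<le> M} \<subseteq>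
        (\<lambda>(w,a). w(n := a)) ` ({v \<in> V n. \<forall>i<n. \<bar>v i\<bar> \<le> M} \<times> {-M..M})"
  proof
    fix v assume v: "v \<in> {v \<in> V (Suc n). \<forall>i<Suc n. \<bar>v i\<bar> \<le> M}"
    have "v = (\<lambda>(w,a). w(n := a)) (v(n := 0), v n)" by simp
    moreover have "(v(n := 0), v n) \<in> {v \<in> V n. \<forall>i<n. \<bar>v i\<bar> \<le> M} \<times> {-M..M}"
      using v by (auto simp: V_def abs_le_iff)
    ultimately show "v \<in> (\<lambda>(w,a). w(n := a)) ` ({v \<in> V n. \<forall>i<n. \<bar>v i\<bar> \<le> M} \<times> {-M..M})"
      by blast
  qed
  then show ?case by (rule finite_subset) (intro finite_imageI finite_cartesian_product Suc.IH finite_atLeastAtMost_int)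
qed

lemma finite_l1: "finite {v \<in> V n. l1 n v \<le> m}"
proof (rule finite_subset[OF _ finite_box[of n "int m"]])
  show "{v \<in> V n. l1 n v \<le> m} \<subseteq> {v \<in> V n. \<forall>i<n. \<bar>v i\<bar> \<le> int m}"
  proof
    fix v assume v: "v \<in> {v \<in> V n. l1 n v \<le> m}"
    have "\<forall>i<n. \<bar>v i\<bar> \<le> int m"
    proof (intro allI impI)
      fix i assume i: "i < n"
      have "nat \<bar>v i\<bar> \<le> m" using l1_ge[OF i, of v] v by simp
      then show "\<bar>v i\<bar> \<le> int m" by simp
    qed
    then show "v \<in> {v \<in> V n. \<forall>i<n. \<bar>v i\<bar> \<le> int m}" using v by simp
  qed
qed

lemma finite_l1': "finite {v \<in> V n. l1 n v \<le> m \<and> P v}"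
  by (rule finite_subset[OF _ finite_l1[of n m]]) auto

lemma card_decomp:
  assumes S: "finite S" and fin: "\<And>a. a \<in> S \<Longrightarrow> finite {w \<in> V n. P w a}"
  shows "card {v \<in> V (Suc n). v n \<in> S \<and> P (v(n := 0)) (v n)} = (\<Sum>a\<in>S. card {w \<in> V n. P w a})"
proof -
  let ?F = "\<lambda>a. (\<lambda>w. w(n := a)) ` {w \<in> V n. P w a}"
  have eq: "{v \<in> V (Suc n). v n \<in> S \<and> P (v(n := 0)) (v n)} = (\<Union>a\<in>S. ?F a)"
  proof (intro equalityI subsetI)
    fix v assume v: "v \<in> {v \<in> V (Suc n). v n \<in> S \<and> P (v(n := 0)) (v n)}"
    then have "v = (v(n := 0))(n := v n)" "v(n:=0) \<in> {w \<in> V n. P w (v n)}"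
      using V_restr by auto
    then show "v \<in> (\<Union>a\<in>S. ?F a)" using v by blast
  next
    fix v assume "v \<in> (\<Union>a\<in>S. ?F a)"
    then obtain a w where a: "a \<in> S" and w: "w \<in> V n" "P w a" and v: "v = w(n := a)" by auto
    have "w n = 0" using w by (simp add: V_def)
    then have "(w(n := a))(n := 0) = w" by auto
    then show "v \<in> {v \<in> V (Suc n). v n \<in> S \<and> P (v(n := 0)) (v n)}"
      using a w v V_upd by auto
  qed
  have inj: "inj_on (\<lambda>w. w(n := a)) {w \<in> V n. P w a}" for a
  proof (rule inj_onI)
    fix w w' assume "w \<in> {w \<in> V n. P w a}" "w' \<in> {w \<in> V n. P w a}" "w(n := a) = w'(n := a)"
    then show "w = w'"
    proof (intro ext)
      fix i
      assume A: "w \<in> {w \<in> V n. P w a}" "w' \<in> {w \<in> V n. P w a}" "w(n := a) = w'(n := a)"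
      show "w i = w' i"
      proof (cases "i = n")
        case True then show ?thesis using A by (simp add: V_def)
      next
        case False then show ?thesis using fun_cong[OF A(3), of i] by simp
      qed
    qed
  qed
  have "card (\<Union>a\<in>S. ?F a) = (\<Sum>a\<in>S. card (?F a))"
  proof (rule card_UN_disjoint)
    show "finite S" by (rule S)
    show "\<forall>a\<in>S. finite (?F a)" using fin by blast
    show "\<forall>a\<in>S. \<forall>b\<in>S. a \<noteq> b \<longrightarrow> ?F a \<inter> ?F b = {}"
    proof (intro ballI impI)
      fix a b assume "a \<in> S" "b \<in> S" "a \<noteq> b"
      show "?F a \<inter> ?F b = {}"
      proof (rule ccontr)
        assume "?F a \<inter> ?F b \<noteq> {}"
        then obtain w w' where "w(n := a) = w'(n := b)" by blast
        then have "a = b" by (metis fun_upd_same)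
        then show False using \<open>a \<noteq> b\<close> by simp
      qed
    qed
  qed
  also have "\<dots> = (\<Sum>a\<in>S. card {w \<in> V n. P w a})"
    by (intro sum.cong refl card_image inj)
  finally show ?thesis using eq by simp
qed

lemma sum_sym:
  fixes g :: "nat \<Rightarrow> nat"
  shows "(\<Sum>a\<in>{-int m..int m}. g (nat \<bar>a\<bar>)) = g 0 + 2 * (\<Sum>j\<in>{1..m}. g j)"
proof (induction m)
  case 0 then show ?case by simp
next
  case (Suc m)
  have e: "{-int (Suc m)..int (Suc m)} = insert (int (Suc m)) (insert (-int (Suc m)) {-int m..int m})"
    by auto
  have h1: "(\<Sum>a\<in>{-int (Suc m)..int (Suc m)}. g (nat \<bar>a\<bar>)) = g (Suc m) + (g (Suc m) + (\<Sum>a\<in>{-int m..int m}. g (nat \<bar>a\<bar>)))"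
  proof -
    have f1: "nat (1 + int m) = Suc m" "nat (int m + 1) = Suc m" by arith+
    show ?thesis unfolding e by (simp add: f1)
  qed
  have h2: "sum g {1..Suc m} = sum g {1..m} + g (Suc m)" by simp
  have "(\<Sum>a\<in>{-int (Suc m)..int (Suc m)}. g (nat \<bar>a\<bar>)) = g (Suc m) + (g (Suc m) + (g 0 + 2 * sum g {1..m}))"
    unfolding h1 Suc.IH ..
  also have "\<dots> = g 0 + 2 * (sum g {1..m} + g (Suc m))" by simp
  also have "\<dots> = g 0 + 2 * sum g {1..Suc m}" unfolding h2 ..
  finally show ?case .
qed

definition RR :: "nat \<Rightarrow> nat \<Rightarrow> nat" where
  "RR n m = card {v \<in> V n. l1 n v \<le> m \<and> even (l1 n v + m)}"

lemma RR_0: "RR 0 m = (if even m then 1 else 0)"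
proof -
  have V0: "V 0 = {\<lambda>_. 0}" by (auto simp: V_def)
  show ?thesis unfolding RR_def V0 by (auto simp: l1_def)
qed

lemma l1_split: "l1 (Suc n) v = l1 n (v(n := 0)) + nat \<bar>v n\<bar>"
  by (simp add: l1_Suc l1_upd)

lemma RR_Suc: "RR (Suc n) m = RR n m + 2 * (\<Sum>j\<in>{1..m}. RR n (m - j))"
proof -
  define P where "P w a \<longleftrightarrow> l1 n w + nat \<bar>a\<bar> \<le> m \<and> even (l1 n w + nat \<bar>a\<bar> + m)" for w a
  have eq1: "{v \<in> V (Suc n). l1 (Suc n) v \<le> m \<and> even (l1 (Suc n) v + m)}
           = {v \<in> V (Suc n). v n \<in> {-int m..int m} \<and> P (v(n := 0)) (v n)}"
    unfolding P_def l1_split by auto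
  have eq2: "{w \<in> V n. P w a} = {w \<in> V n. l1 n w \<le> m - nat \<bar>a\<bar> \<and> even (l1 n w + (m - nat \<bar>a\<bar>))}"
    if "a \<in> {-int m..int m}" for a
  proof -
    have k: "nat \<bar>a\<bar> \<le> m" using that by auto
    have par: "even (x + nat \<bar>a\<bar> + m) \<longleftrightarrow> even (x + (m - nat \<bar>a\<bar>))" for x
    proof -
      have "x + nat \<bar>a\<bar> + m = x + (m - nat \<bar>a\<bar>) + 2 * nat \<bar>a\<bar>" using k by simp
      then have "even (x + nat \<bar>a\<bar> + m) = even (x + (m - nat \<bar>a\<bar>) + 2 * nat \<bar>a\<bar>)" by (rule arg_cong)
      also have "\<dots> = even (x + (m - nat \<bar>a\<bar>))" by simp
      finally show ?thesis .
    qed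
    show ?thesis unfolding P_def
    proof (rule Collect_cong)
      fix w
      have "l1 n w + nat \<bar>a\<bar> \<le> m \<longleftrightarrow> l1 n w \<le> m - nat \<bar>a\<bar>" using k by arith
      then show "(w \<in> V n \<and> l1 n w + nat \<bar>a\<bar> \<le> m \<and> even (l1 n w + nat \<bar>a\<bar> + m)) =
          (w \<in> V n \<and> l1 n w \<le> m - nat \<bar>a\<bar> \<and> even (l1 n w + (m - nat \<bar>a\<bar>)))"
        using par[of "l1 n w"] by blast
    qed
  qed
  have "RR (Suc n) m = (\<Sum>a\<in>{-int m..int m}. card {w \<in> V n. P w a})"
    unfolding RR_def eq1
    by (rule card_decomp) (auto simp: P_def intro: finite_subset[OF _ finite_l1[of n m]])
  also have "\<dots> = (\<Sum>a\<in>{-int m..int m}. RR n (m - nat \<bar>a\<bar>))"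
    by (intro sum.cong refl) (simp add: eq2 RR_def)
  also have "\<dots> = RR n (m - 0) + 2 * (\<Sum>j\<in>{1..m}. RR n (m - j))"
    by (rule sum_sym[where g = "\<lambda>j. RR n (m - j)"])
  finally show ?thesis by simp
qed

lemma sum_tail:
  fixes f :: "nat \<Rightarrow> nat"
  shows "(\<Sum>j\<in>{1..2*k}. if k < j then f (2*k - j) else 0) = (\<Sum>i<k. f i)"
proof -
  have "(\<Sum>j\<in>{1..2*k}. if k < j then f (2*k - j) else 0) = (\<Sum>j\<in>{k+1..2*k}. if k < j then f (2*k - j) else 0)"
    by (rule sum.mono_neutral_right) auto
  also have "\<dots> = (\<Sum>j\<in>{k+1..2*k}. f (2*k - j))" by (intro sum.cong) auto
  also have "\<dots> = (\<Sum>i<k. f i)"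
    by (rule sum.reindex_bij_witness[of _ "\<lambda>i. 2*k - i" "\<lambda>j. 2*k - j"]) auto
  finally show ?thesis .
qed

definition CC :: "nat \<Rightarrow> nat \<Rightarrow> nat" where
  "CC n k = card {v \<in> V (Suc n). l1 (Suc n) v \<le> 2*k \<and> even (l1 (Suc n) v) \<and> k < nat \<bar>v n\<bar>}"

lemma CC_eq: "CC n k = 2 * (\<Sum>i<k. RR n i)"
proof -
  define Q where "Q w a \<longleftrightarrow> k < nat \<bar>a\<bar> \<and> l1 n w + nat \<bar>a\<bar> \<le> 2*k \<and> even (l1 n w + nat \<bar>a\<bar>)" for w a
  have eq1: "{v \<in> V (Suc n). l1 (Suc n) v \<le> 2*k \<and> even (l1 (Suc n) v) \<and> k < nat \<bar>v n\<bar>}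
           = {v \<in> V (Suc n). v n \<in> {-int (2*k)..int (2*k)} \<and> Q (v(n := 0)) (v n)}"
    unfolding Q_def l1_split by auto
  have eq2: "card {w \<in> V n. Q w a} = (if k < nat \<bar>a\<bar> then RR n (2*k - nat \<bar>a\<bar>) else 0)"
    if "a \<in> {-int (2*k)..int (2*k)}" for a
  proof (cases "k < nat \<bar>a\<bar>")
    case True
    have kk: "nat \<bar>a\<bar> \<le> 2*k" using that by auto
    have par: "even (x + nat \<bar>a\<bar>) \<longleftrightarrow> even (x + (2*k - nat \<bar>a\<bar>))" for x
    proof -
      have "x + (2*k - nat \<bar>a\<bar>) + 2 * nat \<bar>a\<bar> = x + nat \<bar>a\<bar> + 2 * k" using kk by simp
      then have "even (x + (2*k - nat \<bar>a\<bar>)) \<longleftrightarrow> even (x + nat \<bar>a\<bar> + 2 * k)"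
        by (metis even_add even_mult_iff even_numeral)
      then show ?thesis by simp
    qed
    then have "{w \<in> V n. Q w a} = {w \<in> V n. l1 n w \<le> 2*k - nat \<bar>a\<bar> \<and> even (l1 n w + (2*k - nat \<bar>a\<bar>))}"
      unfolding Q_def
    proof (intro Collect_cong)
      fix w
      have "l1 n w + nat \<bar>a\<bar> \<le> 2*k \<longleftrightarrow> l1 n w \<le> 2*k - nat \<bar>a\<bar>" using kk by arith
      then show "(w \<in> V n \<and> k < nat \<bar>a\<bar> \<and> l1 n w + nat \<bar>a\<bar> \<le> 2*k \<and> even (l1 n w + nat \<bar>a\<bar>)) =
          (w \<in> V n \<and> l1 n w \<le> 2*k - nat \<bar>a\<bar> \<and> even (l1 n w + (2*k - nat \<bar>a\<bar>)))"
        using par[of "l1 n w"] True by blast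
    qed
    then show ?thesis using True by (simp add: RR_def)
  next
    case False
    then show ?thesis unfolding Q_def by simp
  qed
  have "CC n k = (\<Sum>a\<in>{-int (2*k)..int (2*k)}. card {w \<in> V n. Q w a})"
    unfolding CC_def eq1
    by (rule card_decomp) (auto simp: Q_def intro: finite_subset[OF _ finite_l1[of n "2*k"]])
  also have "\<dots> = (\<Sum>a\<in>{-int (2*k)..int (2*k)}. (\<lambda>j. if k < j then RR n (2*k - j) else 0) (nat \<bar>a\<bar>))"
    by (intro sum.cong refl) (simp add: eq2)
  also have "\<dots> = 2 * (\<Sum>j\<in>{1..2*k}. if k < j then RR n (2*k - j) else 0)"
    by (subst sum_sym) simp
  also have "\<dots> = 2 * (\<Sum>i<k. RR n i)" by (simp only: sum_tail)
  finally show ?thesis .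
qed

abbreviation XX :: "real fps" where "XX \<equiv> fps_X"

definition Rf :: "nat \<Rightarrow> real fps" where "Rf n = Abs_fps (\<lambda>m. real (RR n m))"
definition UU :: "real fps" where "UU = Abs_fps (\<lambda>j. if j = 0 then 1 else 2)"
definition ev :: "real fps \<Rightarrow> real fps" where "ev f = Abs_fps (\<lambda>j. f $ (2*j))"
definition od :: "real fps \<Rightarrow> real fps" where "od f = Abs_fps (\<lambda>j. f $ (2*j+1))"

lemma sum_rev_lt: "(\<Sum>j\<in>{1..m}. f (m - j)) = (\<Sum>i<m. (f i :: nat))" for m :: nat
  by (rule sum.reindex_bij_witness[of _ "\<lambda>i. m - i" "\<lambda>j. m - j"]) auto

lemma Rf_Suc: "Rf (Suc n) = Rf n * UU"
proof (rule fps_ext)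
  fix m
  have "(Rf n * UU) $ m = (\<Sum>i\<in>{..<Suc m}. real (RR n i) * (if m - i = 0 then 1 else 2))"
    by (simp add: fps_mult_nth Rf_def UU_def atLeast0AtMost lessThan_Suc_atMost)
  also have "\<dots> = (\<Sum>i<m. real (RR n i) * 2) + real (RR n m)"
    by (simp add: sum.lessThan_Suc)
  also have "\<dots> = real (RR (Suc n) m)"
    unfolding RR_Suc sum_rev_lt by (simp add: sum_distrib_left algebra_simps)
  finally show "Rf (Suc n) $ m = (Rf n * UU) $ m" by (simp add: Rf_def)
qed

lemma UU_mult: "UU * (1 - XX) = 1 + XX"
proof (rule fps_ext)
  fix k
  have "UU * (1 - XX) = UU - XX * UU" by (simp add: algebra_simps)
  then show "(UU * (1 - XX)) $ k = (1 + XX) $ k"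
    by (cases k) (auto simp: UU_def fps_X_nth)
qed

lemma Rf0: "Rf 0 * (1 - XX^2) = 1"
proof (rule fps_ext)
  fix k
  have "Rf 0 * (1 - XX^2) = Rf 0 - XX^2 * Rf 0" by (simp add: algebra_simps)
  then show "(Rf 0 * (1 - XX^2)) $ k = (1::real fps) $ k"
    by (cases "k < 2") (auto simp: Rf_def RR_0 fps_X_power_mult_nth less_2_cases_iff)
qed

lemma Rf_closed: "Rf n * (1 - XX)^n * (1 - XX^2) = (1 + XX)^n"
proof (induction n)
  case 0 then show ?case using Rf0 by simp
next
  case (Suc n)
  have "Rf (Suc n) * (1 - XX)^(Suc n) * (1 - XX^2) = (UU * (1 - XX)) * (Rf n * (1 - XX)^n * (1 - XX^2))"
    by (simp add: Rf_Suc mult_ac)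
  also have "\<dots> = (1 + XX)^(Suc n)" unfolding UU_mult Suc by simp
  finally show ?case .
qed

lemma ev_lin: "ev ((1 - XX^2) * f) = (1 - XX) * ev f"
proof (rule fps_ext)
  fix j
  have a: "(1 - XX^2) * f = f - XX^2 * f" by (simp add: algebra_simps)
  have b: "(1 - XX) * ev f = ev f - XX * ev f" by (simp add: algebra_simps)
  show "ev ((1 - XX^2) * f) $ j = ((1 - XX) * ev f) $ j"
    unfolding a b by (cases j) (auto simp: ev_def fps_X_power_mult_nth)
qed

lemma ev_pow: "ev ((1 - XX^2)^k * f) = (1 - XX)^k * ev f"
proof (induction k)
  case 0 then show ?case by simp
next
  case (Suc k)
  have "(1 - XX^2)^Suc k * f = (1 - XX^2) * ((1 - XX^2)^k * f)" by (simp add: mult_ac)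
  then have "ev ((1 - XX^2)^Suc k * f) = (1 - XX) * ev ((1 - XX^2)^k * f)" by (simp only: ev_lin)
  also have "\<dots> = (1 - XX) * ((1 - XX)^k * ev f)" by (simp only: Suc)
  finally show ?case by (simp add: mult_ac)
qed

lemma fps_num_mult_nth [simp]: "((numeral k :: real fps) * g) $ n = numeral k * g $ n"
  by (simp only: numeral_fps_const fps_mult_left_const_nth)

lemma fps_two: "fps_const (2::real) * g = g + g"
  by (rule fps_ext) simp

lemma evod_step:
  "ev (f * (1 + XX)^2) = ev f * (1 + XX) + (XX * od f + XX * od f) \<and>
   od (f * (1 + XX)^2) = ev f + ev f + (1 + XX) * od f"
proof -
  have e: "f * (1 + XX)^2 = f + XX * f + XX * f + XX^2 * f" by (simp add: algebra_simps power2_eq_square)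
  have e1: "ev f * (1 + XX) = ev f + XX * ev f" by (simp add: algebra_simps)
  have e2: "(1 + XX) * od f = od f + XX * od f" by (simp add: algebra_simps)
  have "ev (f * (1 + XX)^2) $ j = (ev f * (1 + XX) + (XX * od f + XX * od f)) $ j" for j
    unfolding e e1 by (cases j) (auto simp: ev_def od_def fps_X_power_mult_nth)
  moreover have "od (f * (1 + XX)^2) $ j = (ev f + ev f + (1 + XX) * od f) $ j" for j
    unfolding e e2 by (cases j) (auto simp: ev_def od_def fps_X_power_mult_nth)
  ultimately show ?thesis by (auto intro: fps_ext)
qed

lemma evod: "ev ((1 + XX)^(2*n)) = fps_of_poly (PA n) \<and> od ((1 + XX)^(2*n)) = fps_of_poly (PB n)"
proof (induction n)
  case 0
  have "ev 1 = 1" "od 1 = 0" by (auto intro!: fps_ext simp: ev_def od_def)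
  then show ?case by simp
next
  case (Suc n)
  have e: "(1 + XX)^(2 * Suc n) = (1 + XX)^(2*n) * (1 + XX)^2" by (simp add: power_add[symmetric])
  have l: "fps_of_poly [:1, 1::real:] = 1 + XX" by (simp add: fps_of_poly_linear')
  have pa: "fps_of_poly (PA (Suc n)) = fps_of_poly (PA n) * (1 + XX) + (XX * fps_of_poly (PB n) + XX * fps_of_poly (PB n))"
    by (simp add: PA_Suc fps_of_poly_add fps_of_poly_mult fps_of_poly_smult l fps_two)
  have pb: "fps_of_poly (PB (Suc n)) = fps_of_poly (PA n) + fps_of_poly (PA n) + (1 + XX) * fps_of_poly (PB n)"
    by (simp add: PB_Suc fps_of_poly_add fps_of_poly_mult fps_of_poly_smult l fps_two)
  show ?case unfolding e pa pb using evod_step[of "(1 + XX)^(2*n)"] Suc by simp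
qed

definition Cs :: "nat \<Rightarrow> real fps" where "Cs n = Abs_fps (\<lambda>k. \<Sum>i<k. real (RR n i))"

lemma Cs_mult: "(1 - XX) * Cs n = XX * Rf n"
proof (rule fps_ext)
  fix k
  have a: "(1 - XX) * Cs n = Cs n - XX * Cs n" by (simp add: algebra_simps)
  show "((1 - XX) * Cs n) $ k = (XX * Rf n) $ k"
    unfolding a by (cases k) (auto simp: Cs_def Rf_def)
qed

lemma onepX_nz: "(1 + XX) \<noteq> 0"
proof
  assume "1 + XX = 0"
  then have "(1 + XX) $ 0 = (0::real fps) $ 0" by simp
  then show False by simp
qed

lemma final_fps:
  assumes n: "n = Suc n'" and n': "n' \<ge> 1"
  shows "(1 - XX)^(n+1) * (ev (Rf n) - fps_const (2 * real n) * Cs n') = fps_of_poly (HH n)"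
proof -
  have sq: "1 - XX^2 = (1 - XX) * (1 + XX)" by (simp add: algebra_simps power2_eq_square)
  have e1: "(1 - XX^2)^(n+1) * Rf n = (1 + XX)^(2*n)"
  proof -
    have "(1 - XX^2)^(n+1) * Rf n = (1 + XX)^n * (Rf n * (1 - XX)^n * (1 - XX^2))"
      unfolding sq by (simp add: power_mult_distrib mult_ac)
    also have "\<dots> = (1 + XX)^(2*n)" unfolding Rf_closed by (simp add: mult_2 power_add)
    finally show ?thesis .
  qed
  have A: "(1 - XX)^(n+1) * ev (Rf n) = fps_of_poly (PA n)"
    using ev_pow[of "n+1" "Rf n"] e1 evod[of n] by simp
  have "(1 - XX)^n * Rf n' * (1 + XX) = Rf n' * (1 - XX)^n' * (1 - XX^2)"
    unfolding sq n by (simp add: mult_ac)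
  also have "\<dots> = (1 + XX)^n'" by (rule Rf_closed)
  also have "\<dots> = (1 + XX)^(n - 2) * (1 + XX)"
  proof -
    have "n' = Suc (n - 2)" using n n' by simp
    then show ?thesis by (simp only: power_Suc2)
  qed
  finally have B: "(1 - XX)^n * Rf n' = (1 + XX)^(n - 2)"
    using mult_right_cancel[OF onepX_nz] by blast
  have C: "(1 - XX)^(n+1) * Cs n' = XX * (1 + XX)^(n - 2)"
  proof -
    have "(1 - XX)^(n+1) * Cs n' = (1 - XX)^n * ((1 - XX) * Cs n')" by (simp add: mult_ac)
    also have "\<dots> = XX * ((1 - XX)^n * Rf n')" unfolding Cs_mult by (simp add: mult_ac)
    finally show ?thesis unfolding B .
  qed
  have H: "fps_of_poly (HH n) = fps_of_poly (PA n) - fps_const (2 * real n) * (XX * (1 + XX)^(n - 2))"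
    by (simp add: HH_def fps_of_poly_diff fps_of_poly_smult fps_of_poly_mult fps_of_poly_power fps_of_poly_linear')
  show ?thesis
    unfolding H right_diff_distrib A
    using C by (simp add: mult_ac)
qed

definition gen2 :: "nat \<Rightarrow> nat \<Rightarrow> int \<Rightarrow> int \<Rightarrow> vec" where
  "gen2 i j s t = (\<lambda>k. (if k = i then s else 0) + (if k = j then t else 0))"

lemma M_D_gen2: "m \<in> M_D n \<longleftrightarrow> (\<exists>i j s t. i < j \<and> j < n \<and> s \<in> {1,-1} \<and> t \<in> {1,-1} \<and> m = gen2 i j s t)"
proof -
  have "(\<lambda>k. if k = i then s else if k = j then t else 0) = gen2 i j s t" if "i < j" for i j s t
    using that by (auto simp: gen2_def fun_eq_iff)
  note eq = this
  show ?thesis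
  proof
    assume "m \<in> M_D n"
    then obtain i j s t where A: "i < j" "j < n" "s \<in> {1,-1}" "t \<in> {1,-1}"
      "m = (\<lambda>k. if k = i then s else if k = j then t else 0)" unfolding M_D_def by blast
    then show "\<exists>i j s t. i < j \<and> j < n \<and> s \<in> {1,-1} \<and> t \<in> {1,-1} \<and> m = gen2 i j s t"
      using eq[OF A(1)] by blast
  next
    assume "\<exists>i j s t. i < j \<and> j < n \<and> s \<in> {1,-1} \<and> t \<in> {1,-1} \<and> m = gen2 i j s t"
    then obtain i j s t where A: "i < j" "j < n" "s \<in> {1,-1}" "t \<in> {1,-1}" "m = gen2 i j s t" by blast
    then have "m = (\<lambda>k. if k = i then s else if k = j then t else 0)" using eq[OF A(1)] by simp
    then show "m \<in> M_D n" unfolding M_D_def using A by blast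
  qed
qed

lemma finite_M_D: "finite (M_D n)"
proof -
  have "M_D n \<subseteq> (\<lambda>(i,j,s,t). gen2 i j s t) ` ({..<n} \<times> {..<n} \<times> {1,-1} \<times> {1,-1})"
  proof
    fix m assume "m \<in> M_D n"
    then obtain i j s t where A: "i < j" "j < n" "s \<in> {1,-1}" "t \<in> {1,-1}" "m = gen2 i j s t"
      by (auto simp: M_D_gen2)
    then have "(i,j,s,t) \<in> {..<n} \<times> {..<n} \<times> {1,-1} \<times> {1,-1}" by auto
    then show "m \<in> (\<lambda>(i,j,s,t). gen2 i j s t) ` ({..<n} \<times> {..<n} \<times> {1,-1} \<times> {1,-1})"
      using A(5) by force
  qed
  then show ?thesis by (rule finite_subset) auto
qed

lemma sum_gen2:
  fixes g :: "int \<Rightarrow> 'a::comm_monoid_add"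
  assumes "i \<noteq> j" "i < n" "j < n" "g 0 = 0"
  shows "(\<Sum>k<n. g (gen2 i j s t k)) = g s + g t"
proof -
  have "(\<Sum>k<n. g (gen2 i j s t k)) = (\<Sum>k<n. (if k = i then g s else 0) + (if k = j then g t else 0))"
    using assms by (intro sum.cong) (auto simp: gen2_def)
  also have "\<dots> = g s + g t" using assms by (simp add: sum.distrib)
  finally show ?thesis .
qed

lemma gen_props:
  assumes "m \<in> M_D n"
  shows "m \<in> V n" "\<And>k. \<bar>m k\<bar> \<le> 1" "(\<Sum>k<n. \<bar>m k\<bar>) = 2" "even (\<Sum>k<n. m k)"
proof -
  obtain i j s t where ij: "i < j" "j < n" and s: "s \<in> {1,-1}" and t: "t \<in> {1,-1}" and m: "m = gen2 i j s t"
    using assms by (auto simp: M_D_gen2)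
  show "m \<in> V n" using ij unfolding m V_def gen2_def by auto
  show "\<bar>m k\<bar> \<le> 1" for k using ij s t unfolding m gen2_def by auto
  have "(\<Sum>k<n. \<bar>m k\<bar>) = \<bar>s\<bar> + \<bar>t\<bar>" unfolding m
    by (rule sum_gen2[where g = abs]) (use ij in auto)
  then show "(\<Sum>k<n. \<bar>m k\<bar>) = 2" using s t by auto
  have "(\<Sum>k<n. m k) = s + t" unfolding m
    by (rule sum_gen2[where g = "\<lambda>x. x"]) (use ij in auto)
  then show "even (\<Sum>k<n. m k)" using s t by auto
qed

lemma rep_lower:
  assumes "represents (M_D n) v k"
  shows "v \<in> V n" "\<bar>v t\<bar> \<le> int k" "(\<Sum>t<n. \<bar>v t\<bar>) \<le> 2 * int k" "even (\<Sum>t<n. v t)"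
proof -
  let ?M = "M_D n"
  obtain c where v: "v = (\<lambda>i. \<Sum>m\<in>?M. int (c m) * m i)" and k: "(\<Sum>m\<in>?M. c m) = k"
    using assms unfolding represents_def by blast
  have kk: "(\<Sum>m\<in>?M. int (c m)) = int k" using k by (simp add: of_nat_sum[symmetric])
  show "v \<in> V n"
  proof -
    have "v t = 0" if "t \<ge> n" for t
    proof -
      have "\<And>m. m \<in> ?M \<Longrightarrow> m t = 0" using gen_props(1) that by (auto simp: V_def)
      then show ?thesis unfolding v by (auto intro!: sum.neutral)
    qed
    then show ?thesis by (simp add: V_def)
  qed
  have "\<bar>v t\<bar> \<le> (\<Sum>m\<in>?M. \<bar>int (c m) * m t\<bar>)" unfolding v by (rule sum_abs)
  also have "\<dots> \<le> (\<Sum>m\<in>?M. int (c m))"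
  proof (rule sum_mono)
    fix m assume "m \<in> ?M"
    then have "\<bar>m t\<bar> \<le> 1" by (rule gen_props(2))
    then have "int (c m) * \<bar>m t\<bar> \<le> int (c m) * 1" by (intro mult_left_mono) auto
    then show "\<bar>int (c m) * m t\<bar> \<le> int (c m)" by (simp add: abs_mult)
  qed
  finally show "\<bar>v t\<bar> \<le> int k" using kk by simp
  have "(\<Sum>t<n. \<bar>v t\<bar>) \<le> (\<Sum>t<n. \<Sum>m\<in>?M. int (c m) * \<bar>m t\<bar>)"
  proof (rule sum_mono)
    fix t
    have "\<bar>v t\<bar> \<le> (\<Sum>m\<in>?M. \<bar>int (c m) * m t\<bar>)" unfolding v by (rule sum_abs)
    then show "\<bar>v t\<bar> \<le> (\<Sum>m\<in>?M. int (c m) * \<bar>m t\<bar>)" by (simp add: abs_mult)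
  qed
  also have "\<dots> = (\<Sum>m\<in>?M. int (c m) * (\<Sum>t<n. \<bar>m t\<bar>))"
    by (simp add: sum.swap[of _ "{..<n}"] sum_distrib_left)
  also have "\<dots> = (\<Sum>m\<in>?M. int (c m) * 2)"
    by (intro sum.cong refl) (simp add: gen_props(3))
  also have "\<dots> = 2 * int k" using kk by (simp add: sum_distrib_right[symmetric] mult.commute)
  finally show "(\<Sum>t<n. \<bar>v t\<bar>) \<le> 2 * int k" .
  have "(\<Sum>t<n. v t) = (\<Sum>m\<in>?M. int (c m) * (\<Sum>t<n. m t))"
    unfolding v by (simp add: sum.swap[of _ "{..<n}"] sum_distrib_left)
  also have "even \<dots>"
    by (intro dvd_sum) (simp add: gen_props(4))
  finally show "even (\<Sum>t<n. v t)" .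
qed

lemma rep_zero: "represents M (\<lambda>_. 0) 0"
  unfolding represents_def by (rule exI[of _ "\<lambda>_. 0"]) simp

lemma rep_add:
  assumes "represents M w k" "m \<in> M" "finite M"
  shows "represents M (\<lambda>t. w t + m t) (Suc k)"
proof -
  obtain c where w: "w = (\<lambda>i. \<Sum>x\<in>M. int (c x) * x i)" and k: "(\<Sum>x\<in>M. c x) = k"
    using assms(1) unfolding represents_def by blast
  define c' where "c' x = c x + (if x = m then 1 else 0)" for x
  have "(\<lambda>t. w t + m t) = (\<lambda>i. \<Sum>x\<in>M. int (c' x) * x i)"
  proof
    fix i
    have "(\<Sum>x\<in>M. int (c' x) * x i) = (\<Sum>x\<in>M. int (c x) * x i + (if x = m then m i else 0))"
      by (intro sum.cong refl) (auto simp: c'_def algebra_simps)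
    also have "\<dots> = w i + m i" using assms(2,3) by (simp add: sum.distrib w)
    finally show "w i + m i = (\<Sum>x\<in>M. int (c' x) * x i)" by simp
  qed
  moreover have "(\<Sum>x\<in>M. c' x) = Suc k" using assms(2,3) k by (simp add: c'_def sum.distrib)
  ultimately show ?thesis unfolding represents_def by blast
qed

lemma l1_int: "int (l1 n v) = (\<Sum>t<n. \<bar>v t\<bar>)"
  unfolding l1_def by (simp add: of_nat_sum)

lemma exists_max:
  fixes f :: "nat \<Rightarrow> int"
  assumes "finite A" "A \<noteq> {}"
  shows "\<exists>i\<in>A. \<forall>t\<in>A. f t \<le> f i"
proof -
  have "Max (f ` A) \<in> f ` A" using assms by (intro Max_in) auto
  then obtain i where i: "i \<in> A" "f i = Max (f ` A)" by auto
  have "\<forall>t\<in>A. f t \<le> f i" unfolding i(2) using assms by (auto intro: Max_ge)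
  then show ?thesis using i(1) by blast
qed

lemma split_two:
  fixes g :: "nat \<Rightarrow> int"
  assumes "i \<noteq> j" "i < n" "j < n"
  shows "(\<Sum>x<n. g x) = (\<Sum>x\<in>{..<n} - {i,j}. g x) + g i + g j"
proof -
  have "(\<Sum>x<n. g x) = (\<Sum>x\<in>{..<n} - {i,j}. g x) + (\<Sum>x\<in>{i,j}. g x)"
    using assms by (intro sum.subset_diff) auto
  then show ?thesis using assms by simp
qed

lemma three_le:
  fixes v :: vec
  assumes "i \<noteq> j" "i \<noteq> x" "j \<noteq> x" "i < n" "j < n" "x < n"
  shows "\<bar>v i\<bar> + \<bar>v j\<bar> + \<bar>v x\<bar> \<le> (\<Sum>t<n. \<bar>v t\<bar>)"
proof -
  have "(\<Sum>t\<in>{i,j,x}. \<bar>v t\<bar>) \<le> (\<Sum>t<n. \<bar>v t\<bar>)"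
    by (rule sum_mono2) (use assms in auto)
  then show ?thesis using assms by simp
qed

lemma gen2_sym: "gen2 i j s t = gen2 j i t s"
  by (auto simp: gen2_def fun_eq_iff)

lemma gen2_in:
  assumes "i \<noteq> j" "i < n" "j < n" "s \<in> {1,-1}" "t \<in> {1,-1}"
  shows "gen2 i j s t \<in> M_D n"
proof (cases "i < j")
  case True then show ?thesis using assms by (auto simp: M_D_gen2)
next
  case False
  then have "j < i" using assms by simp
  then show ?thesis using assms unfolding gen2_sym[of i] by (auto simp: M_D_gen2)
qed

lemma arith3: "(p::int) \<le> q \<Longrightarrow> q \<le> r \<Longrightarrow> r + q + p \<le> S \<Longrightarrow> S \<le> 2 * (K + 1) \<Longrightarrow> K \<ge> 0 \<Longrightarrow> p \<le> K"
  by presburger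

definition sg :: "int \<Rightarrow> int" where "sg x = (if x < 0 then -1 else 1)"

lemma sg_in: "sg x \<in> {1,-1}" by (simp add: sg_def)

lemma abs_sg_nz: "x \<noteq> 0 \<Longrightarrow> \<bar>x - sg x\<bar> = \<bar>x\<bar> - 1"
  by (auto simp: sg_def)

lemma abs_sg_z: "\<bar>0 - sg 0\<bar> = 1"
  by (simp add: sg_def)

lemma rep_upper:
  assumes n: "n \<ge> 2"
  shows "v \<in> V n \<Longrightarrow> even (\<Sum>t<n. v t) \<Longrightarrow> (\<Sum>t<n. \<bar>v t\<bar>) \<le> 2 * int k \<Longrightarrow> (\<forall>t<n. \<bar>v t\<bar> \<le> int k)
     \<Longrightarrow> \<exists>k'\<le>k. represents (M_D n) v k'"
proof (induction k arbitrary: v)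
  case 0
  then have "v = (\<lambda>_. 0)" by (auto simp: V_def fun_eq_iff) (meson not_le)
  then show ?case using rep_zero by blast
next
  case (Suc k)
  note vV = Suc.prems(1) and ev = Suc.prems(2) and L = Suc.prems(3) and B = Suc.prems(4)
  show ?case
  proof (cases "\<forall>t<n. v t = 0")
    case True
    then have "v = (\<lambda>_. 0)" using vV by (auto simp: V_def fun_eq_iff) (meson not_le)
    then show ?thesis using rep_zero by blast
  next
    case False
    then obtain t0 where t0: "t0 < n" "v t0 \<noteq> 0" by auto
    have "0 \<in> {..<n}" using n by simp
    then have ne: "{..<n} \<noteq> {}" by blast
    obtain i where i0: "i \<in> {..<n}" "\<forall>t\<in>{..<n}. \<bar>v t\<bar> \<le> \<bar>v i\<bar>"
      using exists_max[OF _ ne, of "\<lambda>t. \<bar>v t\<bar>"] by auto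
    then have i: "i < n" "\<forall>t<n. \<bar>v t\<bar> \<le> \<bar>v i\<bar>" by auto
    have "{..<n} - {i} \<noteq> {}"
    proof -
      have "(if i = 0 then 1 else 0) \<in> {..<n} - {i}" using n by auto
      then show ?thesis by blast
    qed
    then obtain j where j: "j \<in> {..<n} - {i}" "\<forall>t\<in>{..<n} - {i}. \<bar>v t\<bar> \<le> \<bar>v j\<bar>"
      using exists_max[of "{..<n} - {i}" "\<lambda>t. \<bar>v t\<bar>"] by auto
    have jn: "j < n" "j \<noteq> i" using j by auto
    have vi: "v i \<noteq> 0" using i(2) t0 by force
    define m where "m = gen2 i j (sg (v i)) (sg (v j))"
    have mM: "m \<in> M_D n" unfolding m_def using jn i sg_in by (intro gen2_in) auto
    define w where "w = (\<lambda>x. v x - m x)"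
    have wi: "w i = v i - sg (v i)" and wj: "w j = v j - sg (v j)"
      and wo: "\<And>x. x \<noteq> i \<Longrightarrow> x \<noteq> j \<Longrightarrow> w x = v x"
      using jn by (auto simp: w_def m_def gen2_def)
    have wV: "w \<in> V n" using vV gen_props(1)[OF mM] by (auto simp: V_def w_def)
    have msum: "(\<Sum>x<n. m x) = sg (v i) + sg (v j)"
      unfolding m_def using jn i by (intro sum_gen2) auto
    have wev: "even (\<Sum>x<n. w x)"
    proof -
      have "(\<Sum>x<n. w x) = (\<Sum>x<n. v x) - (sg (v i) + sg (v j))"
        unfolding w_def msum[symmetric] by (simp add: sum_subtractf)
      moreover have "even (sg (v i) + sg (v j))" by (auto simp: sg_def)
      ultimately show ?thesis using ev by simp
    qed
    have Lv: "(\<Sum>x<n. \<bar>v x\<bar>) = (\<Sum>x\<in>{..<n} - {i,j}. \<bar>v x\<bar>) + \<bar>v i\<bar> + \<bar>v j\<bar>"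
      using split_two[OF jn(2)[symmetric] i(1) jn(1)] .
    have Lw: "(\<Sum>x<n. \<bar>w x\<bar>) = (\<Sum>x\<in>{..<n} - {i,j}. \<bar>v x\<bar>) + \<bar>w i\<bar> + \<bar>w j\<bar>"
    proof -
      have "(\<Sum>x\<in>{..<n} - {i,j}. \<bar>w x\<bar>) = (\<Sum>x\<in>{..<n} - {i,j}. \<bar>v x\<bar>)"
        by (intro sum.cong) (auto simp: wo)
      then show ?thesis using split_two[OF jn(2)[symmetric] i(1) jn(1), of "\<lambda>x. \<bar>w x\<bar>"] by simp
    qed
    have IHcond: "(\<Sum>x<n. \<bar>w x\<bar>) \<le> 2 * int k \<and> (\<forall>x<n. \<bar>w x\<bar> \<le> int k)"
    proof (cases "v j = 0")
      case False
      have wi': "\<bar>w i\<bar> = \<bar>v i\<bar> - 1" using wi abs_sg_nz[OF vi] by simp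
      have wj': "\<bar>w j\<bar> = \<bar>v j\<bar> - 1" using wj abs_sg_nz[OF False] by simp
      have "(\<Sum>x<n. \<bar>w x\<bar>) \<le> 2 * int k" using Lv Lw wi' wj' L by simp
      moreover have "\<bar>w x\<bar> \<le> int k" if x: "x < n" for x
      proof -
        consider "x = i" | "x = j" | "x \<noteq> i" "x \<noteq> j" by blast
        then show ?thesis
        proof cases
          case 1 then show ?thesis using wi' B i by auto
        next
          case 2 then show ?thesis using wj' B jn by auto
        next
          case 3
          have a: "\<bar>v x\<bar> \<le> \<bar>v j\<bar>" using j(2) x 3 by auto
          have b: "\<bar>v j\<bar> \<le> \<bar>v i\<bar>" using i(2) jn by auto
          have c: "\<bar>v i\<bar> + \<bar>v j\<bar> + \<bar>v x\<bar> \<le> (\<Sum>t<n. \<bar>v t\<bar>)"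
            using three_le[of i j x n v] 3 jn i x by auto
          have "\<bar>v x\<bar> \<le> int (Suc k)" using B x by auto
          have "\<bar>v x\<bar> \<le> int k"
            by (rule arith3[OF a b c]) (use L in simp_all)
          then show ?thesis using wo[OF 3] by simp
        qed
      qed
      ultimately show ?thesis by blast
    next
      case True
      have oth: "v x = 0" if "x < n" "x \<noteq> i" for x
        using j(2) that True by force
      have "(\<Sum>x<n. v x) = (\<Sum>x<n. if x = i then v i else 0)"
        by (intro sum.cong) (auto simp: oth)
      also have "\<dots> = v i" using i by simp
      finally have "even (v i)" using ev by simp
      with vi have vi2: "\<bar>v i\<bar> \<ge> 2" by presburger
      then have k1: "int k \<ge> 1" using B i by fastforce
      have wi': "\<bar>w i\<bar> = \<bar>v i\<bar> - 1" using wi abs_sg_nz[OF vi] by simp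
      have wj': "\<bar>w j\<bar> = 1" using wj True abs_sg_z by simp
      have s0: "(\<Sum>x\<in>{..<n} - {i,j}. \<bar>v x\<bar>) = 0" by (intro sum.neutral) (auto simp: oth)
      have "(\<Sum>x<n. \<bar>w x\<bar>) \<le> 2 * int k" using Lw s0 wi' wj' B i k1 by auto
      moreover have "\<bar>w x\<bar> \<le> int k" if x: "x < n" for x
      proof -
        consider "x = i" | "x = j" | "x \<noteq> i" "x \<noteq> j" by blast
        then show ?thesis
        proof cases
          case 1 then show ?thesis using wi' B i by auto
        next
          case 2 then show ?thesis using wj' k1 by auto
        next
          case 3 then show ?thesis using wo[OF 3] oth[OF x] by simp
        qed
      qed
      ultimately show ?thesis by blast
    qed
    obtain k' where k': "k' \<le> k" "represents (M_D n) w k'"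
      using Suc.IH[OF wV wev] IHcond by blast
    have "represents (M_D n) (\<lambda>x. w x + m x) (Suc k')"
      by (rule rep_add[OF k'(2) mM finite_M_D])
    moreover have "(\<lambda>x. w x + m x) = v" by (simp add: w_def)
    ultimately show ?thesis using k' by auto
  qed
qed

lemma even_sum_l1: "even (\<Sum>t<n. v t) \<longleftrightarrow> even (l1 n v)"
proof -
  have d: "even ((\<Sum>t<n. \<bar>v t\<bar>) - (\<Sum>t<n. v t))"
  proof -
    have "(\<Sum>t<n. \<bar>v t\<bar>) - (\<Sum>t<n. v t) = (\<Sum>t<n. \<bar>v t\<bar> - v t)" by (simp add: sum_subtractf)
    also have "even \<dots>" by (intro dvd_sum) (auto simp: abs_if)
    finally show ?thesis .
  qed
  have "even (\<Sum>t<n. v t) \<longleftrightarrow> even (\<Sum>t<n. \<bar>v t\<bar>)"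
  proof -
    have "(\<Sum>t<n. \<bar>v t\<bar>) = (\<Sum>t<n. v t) + ((\<Sum>t<n. \<bar>v t\<bar>) - (\<Sum>t<n. v t))" by simp
    then show ?thesis using d by (metis even_add)
  qed
  also have "\<dots> \<longleftrightarrow> even (int (l1 n v))" by (simp add: l1_int)
  also have "\<dots> \<longleftrightarrow> even (l1 n v)" by simp
  finally show ?thesis .
qed

lemma lattice_char:
  assumes n: "n \<ge> 2"
  shows "gen_lattice (M_D n) = {v \<in> V n. even (\<Sum>t<n. v t)}"
proof (intro equalityI subsetI)
  fix v assume "v \<in> gen_lattice (M_D n)"
  then obtain k where "represents (M_D n) v k" unfolding gen_lattice_def by blast
  then show "v \<in> {v \<in> V n. even (\<Sum>t<n. v t)}" using rep_lower by blast
next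
  fix v assume v: "v \<in> {v \<in> V n. even (\<Sum>t<n. v t)}"
  have a: "(\<Sum>t<n. \<bar>v t\<bar>) \<le> 2 * int (l1 n v)" unfolding l1_int[symmetric] by simp
  have b: "\<forall>t<n. \<bar>v t\<bar> \<le> int (l1 n v)"
  proof (intro allI impI)
    fix t assume "t < n"
    then have "nat \<bar>v t\<bar> \<le> l1 n v" by (rule l1_ge)
    then show "\<bar>v t\<bar> \<le> int (l1 n v)" by simp
  qed
  obtain k' where "represents (M_D n) v k'" using rep_upper[OF n, of v "l1 n v"] v a b by auto
  then show "v \<in> gen_lattice (M_D n)" unfolding gen_lattice_def by blast
qed

lemma wl_le:
  assumes n: "n \<ge> 2" and v: "v \<in> gen_lattice (M_D n)"
  shows "word_length (M_D n) v \<le> k \<longleftrightarrow> l1 n v \<le> 2*k \<and> (\<forall>t<n. \<bar>v t\<bar> \<le> int k)"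
proof
  assume wl: "word_length (M_D n) v \<le> k"
  obtain k0 where "represents (M_D n) v k0" using v unfolding gen_lattice_def by blast
  then have r: "represents (M_D n) v (word_length (M_D n) v)"
    unfolding word_length_def by (rule LeastI)
  have "int (l1 n v) \<le> 2 * int (word_length (M_D n) v)" unfolding l1_int by (rule rep_lower(3)[OF r])
  then have "l1 n v \<le> 2*k" using wl by linarith
  moreover have "\<forall>t<n. \<bar>v t\<bar> \<le> int k"
    using rep_lower(2)[OF r] wl by (meson dual_order.trans of_nat_le_iff)
  ultimately show "l1 n v \<le> 2*k \<and> (\<forall>t<n. \<bar>v t\<bar> \<le> int k)" by blast
next
  assume A: "l1 n v \<le> 2*k \<and> (\<forall>t<n. \<bar>v t\<bar> \<le> int k)"
  have vv: "v \<in> V n" "even (\<Sum>t<n. v t)" using v lattice_char[OF n] by auto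
  have "(\<Sum>t<n. \<bar>v t\<bar>) \<le> 2 * int k" using A unfolding l1_int[symmetric] by linarith
  then obtain k' where k': "k' \<le> k" "represents (M_D n) v k'" using rep_upper[OF n vv] A by blast
  then have "word_length (M_D n) v \<le> k'" unfolding word_length_def by (intro Least_le) (rule k'(2))
  then show "word_length (M_D n) v \<le> k" using k' by simp
qed

definition Bs :: "nat \<Rightarrow> nat \<Rightarrow> vec set" where
  "Bs n k = {v \<in> V n. even (l1 n v) \<and> l1 n v \<le> 2*k \<and> (\<forall>t<n. \<bar>v t\<bar> \<le> int k)}"

definition Big :: "nat \<Rightarrow> nat \<Rightarrow> nat \<Rightarrow> vec set" where
  "Big n k i = {v \<in> V n. l1 n v \<le> 2*k \<and> even (l1 n v) \<and> k < nat \<bar>v i\<bar>}"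

lemma TT_eq:
  assumes "n \<ge> 2"
  shows "{v \<in> gen_lattice (M_D n). word_length (M_D n) v \<le> k} = Bs n k"
  using wl_le[OF assms] lattice_char[OF assms] even_sum_l1 unfolding Bs_def by auto

lemma finite_Bs: "finite (Bs n k)"
  by (rule finite_subset[OF _ finite_l1[of n "2*k"]]) (auto simp: Bs_def)

definition sw :: "nat \<Rightarrow> nat \<Rightarrow> nat \<Rightarrow> nat" where
  "sw i j t = (if t = i then j else if t = j then i else t)"

lemma sw_sw: "sw i j (sw j i t) = t" by (auto simp: sw_def)

lemma sw_l1:
  assumes "i < n" "j < n"
  shows "l1 n (v \<circ> sw i j) = l1 n v"
  unfolding l1_def
  by (rule sum.reindex_bij_witness[of _ "sw j i" "sw i j"]) (use assms in \<open>auto simp: sw_def\<close>)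

lemma sw_V:
  assumes "v \<in> V n" "i < n" "j < n"
  shows "v \<circ> sw i j \<in> V n"
  using assms by (auto simp: V_def sw_def)

lemma Big_sub:
  assumes "i < n" "j < n"
  shows "(\<lambda>v. v \<circ> sw i j) ` Big n k i \<subseteq> Big n k j"
  using assms sw_l1[OF assms] sw_V[OF _ assms] by (auto simp: Big_def sw_def)

lemma card_Big:
  assumes "i < n" "j < n"
  shows "card (Big n k i) = card (Big n k j)"
proof (rule bij_betw_same_card)
  show "bij_betw (\<lambda>v. v \<circ> sw i j) (Big n k i) (Big n k j)"
  proof (rule bij_betw_byWitness[where f' = "\<lambda>v. v \<circ> sw j i"])
    show "\<forall>a\<in>Big n k i. a \<circ> sw i j \<circ> sw j i = a" by (auto simp: fun_eq_iff sw_sw)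
    show "\<forall>a\<in>Big n k j. a \<circ> sw j i \<circ> sw i j = a" by (auto simp: fun_eq_iff sw_sw)
    show "(\<lambda>v. v \<circ> sw i j) ` Big n k i \<subseteq> Big n k j" by (rule Big_sub[OF assms])
    show "(\<lambda>v. v \<circ> sw j i) ` Big n k j \<subseteq> Big n k i" by (rule Big_sub[OF assms(2,1)])
  qed
qed

lemma two_le_l1:
  assumes "i \<noteq> j" "i < n" "j < n"
  shows "nat \<bar>v i\<bar> + nat \<bar>v j\<bar> \<le> l1 n v"
proof -
  have "(\<Sum>t\<in>{i,j}. nat \<bar>v t\<bar>) \<le> (\<Sum>t<n. nat \<bar>v t\<bar>)"
    by (rule sum_mono2) (use assms in auto)
  then show ?thesis using assms by (simp add: l1_def)
qed

lemma Big_disj: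
  assumes "i \<noteq> j" "i < n" "j < n"
  shows "Big n k i \<inter> Big n k j = {}"
proof (intro equalityI subsetI)
  fix v assume "v \<in> Big n k i \<inter> Big n k j"
  then have "k < nat \<bar>v i\<bar>" "k < nat \<bar>v j\<bar>" "l1 n v \<le> 2*k" by (auto simp: Big_def)
  with two_le_l1[OF assms, of v] show "v \<in> {}" by linarith
qed simp

lemma count_main:
  assumes n: "n = Suc n'"
  shows "RR n (2*k) = card (Bs n k) + n * CC n' k"
proof -
  define EB where "EB = {v \<in> V n. l1 n v \<le> 2*k \<and> even (l1 n v + 2*k)}"
  have RRe: "RR n (2*k) = card EB" by (simp add: RR_def EB_def)
  have EBu: "EB = Bs n k \<union> (\<Union>i\<in>{..<n}. Big n k i)"
    unfolding EB_def Bs_def Big_def by (auto simp: not_less)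
  have fin: "finite (Big n k i)" for i
    by (rule finite_subset[OF _ finite_l1[of n "2*k"]]) (auto simp: Big_def)
  have disj1: "Bs n k \<inter> (\<Union>i\<in>{..<n}. Big n k i) = {}"
    unfolding Bs_def Big_def by auto
  have "card EB = card (Bs n k) + card (\<Union>i\<in>{..<n}. Big n k i)"
    unfolding EBu by (rule card_Un_disjoint) (use finite_Bs fin disj1 in auto)
  also have "card (\<Union>i\<in>{..<n}. Big n k i) = (\<Sum>i<n. card (Big n k i))"
    by (rule card_UN_disjoint) (use fin Big_disj in auto)
  also have "\<dots> = (\<Sum>i<n. card (Big n k n'))"
    by (intro sum.cong refl card_Big) (use n in auto)
  also have "card (Big n k n') = CC n' k" by (simp add: CC_def Big_def n)
  finally show ?thesis using RRe by simp
qed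

lemma Tf_eq:
  assumes n: "n = Suc n'"
  shows "Abs_fps (\<lambda>k. real (card (Bs n k))) = ev (Rf n) - fps_const (2 * real n) * Cs n'"
proof (rule fps_ext)
  fix k
  have c: "RR n (2*k) = card (Bs n k) + n * (2 * (\<Sum>i<k. RR n' i))"
    using count_main[OF n, of k] CC_eq[of n' k] by simp
  have "real (RR n (2*k)) = real (card (Bs n k)) + 2 * real n * (\<Sum>i<k. real (RR n' i))"
    unfolding c by (simp add: of_nat_sum)
  then show "Abs_fps (\<lambda>k. real (card (Bs n k))) $ k = (ev (Rf n) - fps_const (2 * real n) * Cs n') $ k"
    by (simp add: ev_def Rf_def Cs_def)
qed

lemma S_eq:
  assumes n: "n \<ge> 2"
  shows "Abs_fps (\<lambda>k. real (coord_seq (M_D n) k)) = (1 - XX) * Abs_fps (\<lambda>k. real (card (Bs n k)))"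
proof (rule fps_ext)
  fix k
  let ?L = "gen_lattice (M_D n)"
  let ?wl = "word_length (M_D n)"
  have a: "(1 - XX) * Abs_fps (\<lambda>k. real (card (Bs n k))) = Abs_fps (\<lambda>k. real (card (Bs n k))) - XX * Abs_fps (\<lambda>k. real (card (Bs n k)))"
    by (simp add: algebra_simps)
  show "Abs_fps (\<lambda>k. real (coord_seq (M_D n) k)) $ k = ((1 - XX) * Abs_fps (\<lambda>k. real (card (Bs n k)))) $ k"
  proof (cases k)
    case 0
    have "{v \<in> ?L. ?wl v = 0} = {v \<in> ?L. ?wl v \<le> 0}" by auto
    then have "coord_seq (M_D n) 0 = card (Bs n 0)" unfolding coord_seq_def TT_eq[OF n] by simp
    then show ?thesis using 0 unfolding a by simp
  next
    case (Suc k0)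
    have e: "{v \<in> ?L. ?wl v = Suc k0} = {v \<in> ?L. ?wl v \<le> Suc k0} - {v \<in> ?L. ?wl v \<le> k0}" by auto
    have sub: "{v \<in> ?L. ?wl v \<le> k0} \<subseteq> {v \<in> ?L. ?wl v \<le> Suc k0}" by auto
    have fin: "finite {v \<in> ?L. ?wl v \<le> k0}" unfolding TT_eq[OF n] by (rule finite_Bs)
    have "coord_seq (M_D n) (Suc k0) = card (Bs n (Suc k0)) - card (Bs n k0)"
    proof -
      have subB: "Bs n k0 \<subseteq> Bs n (Suc k0)" using sub unfolding TT_eq[OF n] .
      show ?thesis unfolding coord_seq_def e TT_eq[OF n] by (rule card_Diff_subset[OF finite_Bs subB])
    qed
    moreover have "card (Bs n k0) \<le> card (Bs n (Suc k0))"
      using card_mono[OF _ sub] finite_Bs unfolding TT_eq[OF n] by simp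
    ultimately have "real (coord_seq (M_D n) (Suc k0)) = real (card (Bs n (Suc k0))) - real (card (Bs n k0))"
      by simp
    then show ?thesis using Suc unfolding a by simp
  qed
qed

lemma main_fps:
  assumes n: "n \<ge> 2"
  shows "fps_of_poly (HH n) = (1 - fps_X) ^ n * Abs_fps (\<lambda>k. real (coord_seq (M_D n) k))"
proof -
  obtain n' where n': "n = Suc n'" "n' \<ge> 1" using n by (metis Suc_le_D Suc_le_mono one_add_one plus_1_eq_Suc)
  have "(1 - fps_X) ^ n * Abs_fps (\<lambda>k. real (coord_seq (M_D n) k))
        = (1 - XX)^(n+1) * Abs_fps (\<lambda>k. real (card (Bs n k)))"
    unfolding S_eq[OF n] by (simp add: mult_ac)
  also have "\<dots> = fps_of_poly (HH n)" unfolding Tf_eq[OF n'(1)] by (rule final_fps[OF n'])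
  finally show ?thesis by simp
qed

theorem theorem2p1:
  fixes n :: nat
  assumes "n \<ge> 2"
  shows "fps_of_poly (h_D n) = (1 - fps_X) ^ n * Abs_fps (\<lambda>k. real (coord_seq (M_D n) k))
         \<and> real_rooted (h_D n)"
proof -
  have "h_D n = HH n"
    unfolding h_D_def coordinator_poly_def
  proof (rule the1_equality)
    show "\<exists>!h. fps_of_poly h = (1 - fps_X) ^ n * Abs_fps (\<lambda>k. real (coord_seq (M_D n) k))"
      using main_fps[OF assms] by (metis fps_of_poly_eq_iff)
    show "fps_of_poly (HH n) = (1 - fps_X) ^ n * Abs_fps (\<lambda>k. real (coord_seq (M_D n) k))"
      by (rule main_fps[OF assms])
  qed
  then show ?thesis using main_fps[OF assms] HH_real_rooted[OF assms] by simp
qed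

end
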